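(* Every irreflexive relation $R\subseteq\Sigma^*\times\Sigma^*$ that is left synchronous, and every irreflexive relation that is right synchronous, has a rational asymmetric partition.
   Context: A transducer over a finite alphabet $\Sigma$ has finitely many states, transitions labelled $x/y$ with $x,y\in\Sigma\cup\{\lambda\}$ ($\lambda$ the empty word), initial and final states; it realizes the set of input/output label pairs of its accepting computations. A relation is rational if it is realized by some transducer. A transducer is letter-to-letter if all labels are $\sigma/\tau$ with $\sigma,\tau\in\Sigma$. The product of relations is $R_1R_2=\{u_1u_2/v_1v_2 : u_1/v_1\in R_1,\ u_2/v_2\in R_2\}$. $R$ is left synchronous if it is a finite union of relations each of the form $S(A\times\{\lambda\})$ or $S(\{\lambda\}\times A)$, where $A\subseteq\Sigma^*$ is regular and $S$ is realized by a letter-to-letter transducer; it is right synchronous if it is a finite union of relations of the form $(A\times\{\lambda\})S$ or $(\{\lambda\}\times A)S$. A relation is irreflexive if it contains no pair $u/u$; a relation $A$ is asymmetric if $x/y\in A$ implies $y/x\notin A$. A rational asymmetric partition of an irreflexive relation $I$ is a partition $\{A,B\}$ of $I$ into two asymmetric rational relations. *)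

theory Defs
  imports Main
begin

text \<open>Words over a finite alphabet: the alphabet is a type 'a of class finite,
 words are lists, the empty word lambda is []. A relation is a set of pairs of words.\<close>

type_synonym 'a wrel = "('a list \<times> 'a list) set"

text \<open>Transducers: finitely many states (natural numbers), transitions labelled x/y
 with x, y in Sigma or lambda (None encodes lambda).\<close>

record 'a transducer =
  t_states :: "nat set"
  t_init   :: "nat set"
  t_final  :: "nat set"
  t_trans  :: "(nat \<times> 'a option \<times> 'a option \<times> nat) set"

definition wf_transducer :: "'a transducer \<Rightarrow> bool" where
  "wf_transducer T \<longleftrightarrow> finite (t_states T) \<and> t_init T \<subseteq> t_states T \<and>
     t_final T \<subseteq> t_states T \<and>
     (\<forall>(q, x, y, p) \<in> t_trans T. q \<in> t_states T \<and> p \<in> t_states T)"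

definition opt_word :: "'a option \<Rightarrow> 'a list" where
  "opt_word x = (case x of None \<Rightarrow> [] | Some a \<Rightarrow> [a])"

inductive t_run :: "'a transducer \<Rightarrow> nat \<Rightarrow> 'a list \<Rightarrow> 'a list \<Rightarrow> nat \<Rightarrow> bool" for T where
  t_run_nil: "q \<in> t_states T \<Longrightarrow> t_run T q [] [] q"
| t_run_step: "(q, x, y, p) \<in> t_trans T \<Longrightarrow> t_run T p u v r \<Longrightarrow>
                 t_run T q (opt_word x @ u) (opt_word y @ v) r"

definition realizes :: "'a transducer \<Rightarrow> 'a wrel" where
  "realizes T = {(u, v). \<exists>q\<in>t_init T. \<exists>p\<in>t_final T. t_run T q u v p}"

definition rational_rel :: "'a wrel \<Rightarrow> bool" where
  "rational_rel R \<longleftrightarrow> (\<exists>T. wf_transducer T \<and> realizes T = R)"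

definition letter_to_letter :: "'a transducer \<Rightarrow> bool" where
  "letter_to_letter T \<longleftrightarrow> (\<forall>(q, x, y, p) \<in> t_trans T. x \<noteq> None \<and> y \<noteq> None)"

record 'a nfa =
  n_states :: "nat set"
  n_init   :: "nat set"
  n_final  :: "nat set"
  n_trans  :: "(nat \<times> 'a \<times> nat) set"

definition wf_nfa :: "'a nfa \<Rightarrow> bool" where
  "wf_nfa M \<longleftrightarrow> finite (n_states M) \<and> n_init M \<subseteq> n_states M \<and>
     n_final M \<subseteq> n_states M \<and>
     (\<forall>(q, a, p) \<in> n_trans M. q \<in> n_states M \<and> p \<in> n_states M)"

inductive n_run :: "'a nfa \<Rightarrow> nat \<Rightarrow> 'a list \<Rightarrow> nat \<Rightarrow> bool" for M where
  n_run_nil: "q \<in> n_states M \<Longrightarrow> n_run M q [] q"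
| n_run_step: "(q, a, p) \<in> n_trans M \<Longrightarrow> n_run M p w r \<Longrightarrow> n_run M q (a # w) r"

definition accepts :: "'a nfa \<Rightarrow> 'a list set" where
  "accepts M = {w. \<exists>q\<in>n_init M. \<exists>p\<in>n_final M. n_run M q w p}"

definition regular_lang :: "'a list set \<Rightarrow> bool" where
  "regular_lang A \<longleftrightarrow> (\<exists>M. wf_nfa M \<and> accepts M = A)"

definition rel_prod :: "'a wrel \<Rightarrow> 'a wrel \<Rightarrow> 'a wrel" where
  "rel_prod R1 R2 = {(u1 @ u2, v1 @ v2) | u1 u2 v1 v2. (u1, v1) \<in> R1 \<and> (u2, v2) \<in> R2}"

definition letter_to_letter_rel :: "'a wrel \<Rightarrow> bool" where
  "letter_to_letter_rel S \<longleftrightarrow> (\<exists>T. wf_transducer T \<and> letter_to_letter T \<and> realizes T = S)"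

definition left_sync_component :: "'a wrel \<Rightarrow> bool" where
  "left_sync_component R \<longleftrightarrow> (\<exists>S A. letter_to_letter_rel S \<and> regular_lang A \<and>
     (R = rel_prod S (A \<times> {[]}) \<or> R = rel_prod S ({[]} \<times> A)))"

definition right_sync_component :: "'a wrel \<Rightarrow> bool" where
  "right_sync_component R \<longleftrightarrow> (\<exists>S A. letter_to_letter_rel S \<and> regular_lang A \<and>
     (R = rel_prod (A \<times> {[]}) S \<or> R = rel_prod ({[]} \<times> A) S))"

definition left_synchronous :: "'a wrel \<Rightarrow> bool" where
  "left_synchronous R \<longleftrightarrow> (\<exists>F. finite F \<and> (\<forall>C\<in>F. left_sync_component C) \<and> R = \<Union>F)"

definition right_synchronous :: "'a wrel \<Rightarrow> bool" where
  "right_synchronous R \<longleftrightarrow> (\<exists>F. finite F \<and> (\<forall>C\<in>F. right_sync_component C) \<and> R = \<Union>F)"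

definition irreflexive_rel :: "'a wrel \<Rightarrow> bool" where
  "irreflexive_rel R \<longleftrightarrow> (\<forall>u. (u, u) \<notin> R)"

definition asymmetric_rel :: "'a wrel \<Rightarrow> bool" where
  "asymmetric_rel A \<longleftrightarrow> (\<forall>x y. (x, y) \<in> A \<longrightarrow> (y, x) \<notin> A)"

definition rational_asym_partition :: "'a wrel \<Rightarrow> 'a wrel \<Rightarrow> 'a wrel \<Rightarrow> bool" where
  "rational_asym_partition I A B \<longleftrightarrow> A \<union> B = I \<and> A \<inter> B = {} \<and>
     rational_rel A \<and> rational_rel B \<and> asymmetric_rel A \<and> asymmetric_rel B"

end

theory Submission
  imports Defs
begin

lemma odd_neq[simp]: "2*(q::nat) \<noteq> Suc (2*p)" "Suc (2*p) \<noteq> 2*(q::nat)" by presburger+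

lemma opt_word_simps[simp]: "opt_word None = []" "opt_word (Some a) = [a]"
  by (simp_all add: opt_word_def)

lemma run_trans: "t_run T q u v p \<Longrightarrow> t_run T p u' v' r \<Longrightarrow> t_run T q (u@u') (v@v') r"
  by (induction rule: t_run.induct) (auto intro: t_run.intros)

lemma run_states: "t_run T q u v p \<Longrightarrow> wf_transducer T \<Longrightarrow> q \<in> t_states T \<and> p \<in> t_states T"
  by (induction rule: t_run.induct) (auto simp: wf_transducer_def)

lemma run_embed:
  assumes "t_run T q u v p"
    and "\<And>q x y p. (q,x,y,p) \<in> t_trans T \<Longrightarrow> (g q,x,y,g p) \<in> t_trans T'"
    and "\<And>q. q \<in> t_states T \<Longrightarrow> g q \<in> t_states T'"
  shows "t_run T' (g q) u v (g p)"
  using assms(1) by (induction rule: t_run.induct) (auto intro: t_run.intros assms(2,3))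

lemma run_reflect:
  assumes "t_run T' s u v r" "s = g q" "q \<in> t_states T" "wf_transducer T"
    and "\<And>q x y r. (g q,x,y,r) \<in> t_trans T' \<Longrightarrow> q \<in> t_states T \<Longrightarrow> \<exists>p. r = g p \<and> (q,x,y,p) \<in> t_trans T"
  shows "\<exists>p. r = g p \<and> t_run T q u v p"
  using assms(1-3)
proof (induction arbitrary: q rule: t_run.induct)
  case (t_run_nil q')
  then show ?case by (auto intro: t_run.intros)
next
  case (t_run_step s x y s' u v r)
  then obtain p where p: "s' = g p" "(q,x,y,p) \<in> t_trans T" using assms(5) by blast
  then have "p \<in> t_states T" using assms(4) by (auto simp: wf_transducer_def)
  then obtain p' where "r = g p'" "t_run T p u v p'" using t_run_step p by blast
  then show ?case using p by (auto intro: t_run.intros)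
qed

definition union_t :: "'a transducer \<Rightarrow> 'a transducer \<Rightarrow> 'a transducer" where
  "union_t T1 T2 = \<lparr>t_states = (\<lambda>q. 2*q) ` t_states T1 \<union> (\<lambda>q. Suc (2*q)) ` t_states T2,
     t_init = (\<lambda>q. 2*q) ` t_init T1 \<union> (\<lambda>q. Suc (2*q)) ` t_init T2,
     t_final = (\<lambda>q. 2*q) ` t_final T1 \<union> (\<lambda>q. Suc (2*q)) ` t_final T2,
     t_trans = {(2*q,x,y,2*p) | q x y p. (q,x,y,p) \<in> t_trans T1} \<union>
               {(Suc (2*q),x,y,Suc (2*p)) | q x y p. (q,x,y,p) \<in> t_trans T2}\<rparr>"

lemma union_t_wf: "wf_transducer T1 \<Longrightarrow> wf_transducer T2 \<Longrightarrow> wf_transducer (union_t T1 T2)"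
  unfolding wf_transducer_def union_t_def by auto

lemma union_t_realizes:
  assumes "wf_transducer T1" "wf_transducer T2"
  shows "realizes (union_t T1 T2) = realizes T1 \<union> realizes T2"
proof
  show "realizes T1 \<union> realizes T2 \<subseteq> realizes (union_t T1 T2)"
  proof
    fix w assume "w \<in> realizes T1 \<union> realizes T2"
    then show "w \<in> realizes (union_t T1 T2)"
    proof
      assume "w \<in> realizes T1"
      then obtain u v q p where "w = (u,v)" "q \<in> t_init T1" "p \<in> t_final T1" "t_run T1 q u v p"
        unfolding realizes_def by auto
      moreover have "t_run (union_t T1 T2) (2*q) u v (2*p)"
        by (rule run_embed[OF \<open>t_run T1 q u v p\<close>]) (auto simp: union_t_def)
      ultimately show ?thesis unfolding realizes_def by (auto simp: union_t_def)
    next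
      assume "w \<in> realizes T2"
      then obtain u v q p where "w = (u,v)" "q \<in> t_init T2" "p \<in> t_final T2" "t_run T2 q u v p"
        unfolding realizes_def by auto
      moreover have "t_run (union_t T1 T2) ((\<lambda>q. Suc (2*q)) q) u v ((\<lambda>q. Suc (2*q)) p)"
        by (rule run_embed[OF \<open>t_run T2 q u v p\<close>]) (auto simp: union_t_def)
      ultimately show ?thesis unfolding realizes_def by (auto simp: union_t_def)
    qed
  qed
next
  show "realizes (union_t T1 T2) \<subseteq> realizes T1 \<union> realizes T2"
  proof
    fix w assume "w \<in> realizes (union_t T1 T2)"
    then obtain u v s r where w: "w = (u,v)" "s \<in> t_init (union_t T1 T2)" "r \<in> t_final (union_t T1 T2)"
      "t_run (union_t T1 T2) s u v r" unfolding realizes_def by auto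
    show "w \<in> realizes T1 \<union> realizes T2"
    proof (cases "s \<in> (\<lambda>q. 2*q) ` t_init T1")
      case True
      then obtain q where q: "s = 2*q" "q \<in> t_init T1" by auto
      have "\<exists>p. r = 2*p \<and> t_run T1 q u v p"
        apply (rule run_reflect[where g="\<lambda>q. 2*q", OF w(4) q(1) _ assms(1)])
        using q assms(1) by (auto simp: union_t_def wf_transducer_def)
      then obtain p where "r = 2*p" "t_run T1 q u v p" by auto
      then show ?thesis using w q unfolding realizes_def by (auto simp: union_t_def)
    next
      case False
      then obtain q where q: "s = (\<lambda>q. Suc (2*q)) q" "q \<in> t_init T2" using w(2) by (auto simp: union_t_def)
      have "\<exists>p. r = (\<lambda>q. Suc (2*q)) p \<and> t_run T2 q u v p"
        apply (rule run_reflect[where g="\<lambda>q. Suc (2*q)", OF w(4) q(1) _ assms(2)])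
        using q assms(2) by (auto simp: union_t_def wf_transducer_def)
      then obtain p where "r = Suc (2*p)" "t_run T2 q u v p" by auto
      then show ?thesis using w q unfolding realizes_def by (auto simp: union_t_def)
    qed
  qed
qed

lemma rational_union: "rational_rel R1 \<Longrightarrow> rational_rel R2 \<Longrightarrow> rational_rel (R1 \<union> R2)"
  unfolding rational_rel_def using union_t_wf union_t_realizes by metis

lemma rational_empty: "rational_rel {}"
  unfolding rational_rel_def
  by (rule exI[of _ "\<lparr>t_states = {}, t_init = {}, t_final = {}, t_trans = {}\<rparr>"])
     (auto simp: wf_transducer_def realizes_def)

lemma rational_Union: "finite F \<Longrightarrow> (\<forall>C\<in>F. rational_rel C) \<Longrightarrow> rational_rel (\<Union>F)"
  by (induction rule: finite_induct) (auto intro: rational_union rational_empty)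


definition conc_t :: "'a transducer \<Rightarrow> 'a transducer \<Rightarrow> 'a transducer" where
  "conc_t T1 T2 = \<lparr>t_states = (\<lambda>q. 2*q) ` t_states T1 \<union> (\<lambda>q. Suc (2*q)) ` t_states T2,
     t_init = (\<lambda>q. 2*q) ` t_init T1,
     t_final = (\<lambda>q. Suc (2*q)) ` t_final T2,
     t_trans = {(2*q,x,y,2*p) | q x y p. (q,x,y,p) \<in> t_trans T1} \<union>
               {(Suc (2*q),x,y,Suc (2*p)) | q x y p. (q,x,y,p) \<in> t_trans T2} \<union>
               {(2*q,None,None,Suc (2*p)) | q p. q \<in> t_final T1 \<and> p \<in> t_init T2}\<rparr>"

lemma conc_t_wf: "wf_transducer T1 \<Longrightarrow> wf_transducer T2 \<Longrightarrow> wf_transducer (conc_t T1 T2)"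
  unfolding wf_transducer_def conc_t_def by auto

lemma conc_odd:
  assumes "t_run (conc_t T1 T2) (Suc (2*q)) u v r" "q \<in> t_states T2" "wf_transducer T2"
  shows "\<exists>p. r = Suc (2*p) \<and> t_run T2 q u v p"
  apply (rule run_reflect[where g="\<lambda>q. Suc (2*q)", OF assms(1) _ assms(2,3)])
  by (auto simp: conc_t_def)

lemma conc_even:
  assumes "t_run (conc_t T1 T2) s u v r" "s = 2*q" "q \<in> t_states T1" "r = Suc (2*p)"
    "wf_transducer T1" "wf_transducer T2"
  shows "\<exists>u1 u2 v1 v2 q1 q2. u = u1@u2 \<and> v = v1@v2 \<and> t_run T1 q u1 v1 q1 \<and> q1 \<in> t_final T1
     \<and> q2 \<in> t_init T2 \<and> t_run T2 q2 u2 v2 p"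
  using assms(1-4)
proof (induction arbitrary: q rule: t_run.induct)
  case (t_run_nil q')
  then show ?case by simp
next
  case (t_run_step s x y s' u v r)
  from t_run_step.hyps(1) t_run_step.prems(1) consider
    (a) q' where "s' = 2*q'" "(q,x,y,q') \<in> t_trans T1"
  | (b) q2 where "x = None" "y = None" "s' = Suc (2*q2)" "q \<in> t_final T1" "q2 \<in> t_init T2"
    by (auto simp: conc_t_def)
  then show ?case
  proof cases
    case a
    then have "q' \<in> t_states T1" using assms(5) by (auto simp: wf_transducer_def)
    then obtain u1 u2 v1 v2 q1 q2 where "u = u1@u2" "v = v1@v2" "t_run T1 q' u1 v1 q1" "q1 \<in> t_final T1"
      "q2 \<in> t_init T2" "t_run T2 q2 u2 v2 p" using t_run_step a by blast
    then show ?thesis using a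
      by (intro exI[of _ "opt_word x @ u1"] exI[of _ u2] exI[of _ "opt_word y @ v1"] exI[of _ v2]
          exI[of _ q1] exI[of _ q2]) (auto intro: t_run.intros)
  next
    case b
    then have "q2 \<in> t_states T2" using assms(6) by (auto simp: wf_transducer_def)
    then obtain p' where "r = Suc (2*p')" "t_run T2 q2 u v p'"
      using conc_odd[OF _ _ assms(6)] t_run_step.hyps(2) b by blast
    moreover have "t_run T1 q [] [] q" using t_run_step.prems(2) by (rule t_run_nil)
    ultimately show ?thesis using b t_run_step.prems
      by (intro exI[of _ "[]"] exI[of _ u] exI[of _ "[]"] exI[of _ v] exI[of _ q] exI[of _ q2]) auto
  qed
qed

lemma conc_t_realizes:
  assumes "wf_transducer T1" "wf_transducer T2"
  shows "realizes (conc_t T1 T2) = rel_prod (realizes T1) (realizes T2)"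
proof
  show "rel_prod (realizes T1) (realizes T2) \<subseteq> realizes (conc_t T1 T2)"
  proof
    fix w assume "w \<in> rel_prod (realizes T1) (realizes T2)"
    then obtain u1 u2 v1 v2 q1 p1 q2 p2 where w: "w = (u1@u2, v1@v2)"
      "q1 \<in> t_init T1" "p1 \<in> t_final T1" "t_run T1 q1 u1 v1 p1"
      "q2 \<in> t_init T2" "p2 \<in> t_final T2" "t_run T2 q2 u2 v2 p2"
      unfolding rel_prod_def realizes_def by blast
    have r1: "t_run (conc_t T1 T2) (2*q1) u1 v1 (2*p1)"
      by (rule run_embed[OF w(4)]) (auto simp: conc_t_def)
    have r2: "t_run (conc_t T1 T2) ((\<lambda>q. Suc (2*q)) q2) u2 v2 ((\<lambda>q. Suc (2*q)) p2)"
      by (rule run_embed[OF w(7)]) (auto simp: conc_t_def)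
    have "(2*p1, None, None, Suc (2*q2)) \<in> t_trans (conc_t T1 T2)"
      using w by (auto simp: conc_t_def)
    from t_run_step[OF this r2] have "t_run (conc_t T1 T2) (2*p1) u2 v2 (Suc (2*p2))" by simp
    from run_trans[OF r1 this] show "w \<in> realizes (conc_t T1 T2)"
      using w unfolding realizes_def by (auto simp: conc_t_def)
  qed
next
  show "realizes (conc_t T1 T2) \<subseteq> rel_prod (realizes T1) (realizes T2)"
  proof
    fix w assume "w \<in> realizes (conc_t T1 T2)"
    then obtain u v q p where w: "w = (u,v)" "q \<in> t_init T1" "p \<in> t_final T2"
      "t_run (conc_t T1 T2) (2*q) u v (Suc (2*p))" unfolding realizes_def by (auto simp: conc_t_def)
    have "q \<in> t_states T1" using w assms(1) by (auto simp: wf_transducer_def)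
    from conc_even[OF w(4) refl this refl assms] w
    show "w \<in> rel_prod (realizes T1) (realizes T2)"
      unfolding rel_prod_def realizes_def by blast
  qed
qed

lemma rational_prod: "rational_rel R1 \<Longrightarrow> rational_rel R2 \<Longrightarrow> rational_rel (rel_prod R1 R2)"
  unfolding rational_rel_def using conc_t_wf conc_t_realizes by metis


definition lexP :: "('a \<Rightarrow> 'a \<Rightarrow> bool) \<Rightarrow> 'a list \<Rightarrow> 'a list \<Rightarrow> bool" where
  "lexP P u v \<longleftrightarrow> (\<exists>p a b s t. u = p@a#s \<and> v = p@b#t \<and> P a b)"

lemma lexP_Nil[simp]: "\<not> lexP P [] v" "\<not> lexP P u []"
  unfolding lexP_def by auto

lemma lexP_Cons: "lexP P (a#u) (b#v) \<longleftrightarrow> P a b \<or> (a = b \<and> lexP P u v)"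
proof
  assume "lexP P (a#u) (b#v)"
  then obtain p c d s t where h: "a#u = p@c#s" "b#v = p@d#t" "P c d" unfolding lexP_def by blast
  show "P a b \<or> (a = b \<and> lexP P u v)"
  proof (cases p)
    case Nil then show ?thesis using h by auto
  next
    case (Cons e p') then show ?thesis using h unfolding lexP_def by auto
  qed
next
  assume "P a b \<or> (a = b \<and> lexP P u v)"
  then show "lexP P (a#u) (b#v)"
  proof
    assume "P a b" then show ?thesis unfolding lexP_def by (rule_tac x="[]" in exI) auto
  next
    assume "a = b \<and> lexP P u v"
    then obtain p c d s t where "a = b" "u = p@c#s" "v = p@d#t" "P c d" unfolding lexP_def by blast
    then show ?thesis unfolding lexP_def by (rule_tac x="a#p" in exI) auto
  qed
qed

lemma l2l_length: "t_run T q u v p \<Longrightarrow> letter_to_letter T \<Longrightarrow> length u = length v"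
  by (induction rule: t_run.induct) (auto simp: letter_to_letter_def opt_word_def split: option.splits)

definition lex_t :: "'a transducer \<Rightarrow> ('a \<Rightarrow> 'a \<Rightarrow> bool) \<Rightarrow> 'a transducer" where
  "lex_t T P = \<lparr>t_states = (\<lambda>q. 2*q) ` t_states T \<union> (\<lambda>q. Suc (2*q)) ` t_states T,
     t_init = (\<lambda>q. 2*q) ` t_init T,
     t_final = (\<lambda>q. Suc (2*q)) ` t_final T,
     t_trans = {(2*q,x,y,2*p) | q x y p. (q,x,y,p) \<in> t_trans T \<and> x = y} \<union>
               {(2*q,Some a,Some b,Suc (2*p)) | q a b p. (q,Some a,Some b,p) \<in> t_trans T \<and> P a b} \<union>
               {(Suc (2*q),x,y,Suc (2*p)) | q x y p. (q,x,y,p) \<in> t_trans T}\<rparr>"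

lemma lex_t_wf: "wf_transducer T \<Longrightarrow> wf_transducer (lex_t T P)"
  unfolding wf_transducer_def lex_t_def by auto

lemma run_step_some: "(s0, Some a, Some b, s) \<in> t_trans T \<Longrightarrow> t_run T s u v r \<Longrightarrow> t_run T s0 (a#u) (b#v) r"
  using t_run_step[of s0 "Some a" "Some b" s T u v r] by simp

lemma lex_fwd:
  assumes "t_run T q u v p" "letter_to_letter T" "wf_transducer T"
  shows "(u = v \<longrightarrow> t_run (lex_t T P) (2*q) u v (2*p)) \<and>
         (lexP P u v \<longrightarrow> t_run (lex_t T P) (2*q) u v (Suc (2*p))) \<and>
         t_run (lex_t T P) (Suc (2*q)) u v (Suc (2*p))"
  using assms(1)
proof (induction rule: t_run.induct)
  case (t_run_nil q)
  then show ?case by (auto intro!: t_run.t_run_nil simp: lex_t_def)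
next
  case (t_run_step q x y q' u v r)
  then obtain a b where ab: "x = Some a" "y = Some b" using assms(2) unfolding letter_to_letter_def by blast
  have o: "(Suc (2*q), x, y, Suc (2*q')) \<in> t_trans (lex_t T P)" using t_run_step by (auto simp: lex_t_def)
  have e: "a = b \<Longrightarrow> (2*q, x, y, 2*q') \<in> t_trans (lex_t T P)" using t_run_step ab by (auto simp: lex_t_def)
  have d: "P a b \<Longrightarrow> (2*q, x, y, Suc (2*q')) \<in> t_trans (lex_t T P)" using t_run_step ab by (auto simp: lex_t_def)
  note IH = t_run_step.IH
  show ?case
  proof (intro conjI impI)
    show "t_run (lex_t T P) (Suc (2*q)) (opt_word x @ u) (opt_word y @ v) (Suc (2*r))"
      using t_run.t_run_step[OF o] IH by blast
  next
    assume "opt_word x @ u = opt_word y @ v"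
    then have "a = b" "u = v" using ab by auto
    then show "t_run (lex_t T P) (2*q) (opt_word x @ u) (opt_word y @ v) (2*r)"
      using t_run.t_run_step[OF e] IH by blast
  next
    assume "lexP P (opt_word x @ u) (opt_word y @ v)"
    then have "P a b \<or> (a = b \<and> lexP P u v)" using ab by (simp add: lexP_Cons)
    then show "t_run (lex_t T P) (2*q) (opt_word x @ u) (opt_word y @ v) (Suc (2*r))"
    proof
      assume "P a b" then show ?thesis using t_run.t_run_step[OF d] IH by blast
    next
      assume "a = b \<and> lexP P u v" then show ?thesis using t_run.t_run_step[OF e] IH by blast
    qed
  qed
qed

lemma lex_odd:
  assumes "t_run (lex_t T P) (Suc (2*q)) u v r" "q \<in> t_states T" "wf_transducer T"
  shows "\<exists>p. r = Suc (2*p) \<and> t_run T q u v p"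
  apply (rule run_reflect[where g="\<lambda>q. Suc (2*q)", OF assms(1) _ assms(2,3)])
  by (auto simp: lex_t_def)

lemma lex_bwd:
  assumes "t_run (lex_t T P) s u v r" "s = 2*q" "q \<in> t_states T" "wf_transducer T"
  shows "(r = Suc (2*p) \<longrightarrow> t_run T q u v p \<and> lexP P u v)"
  using assms(1-3)
proof (induction arbitrary: q rule: t_run.induct)
  case (t_run_nil q')
  then show ?case by simp
next
  case (t_run_step s x y s' u v r)
  from t_run_step.hyps(1) t_run_step.prems(1) consider
    (a) q' where "s' = 2*q'" "(q,x,y,q') \<in> t_trans T" "x = y"
  | (b) q' a b where "x = Some a" "y = Some b" "s' = Suc (2*q')" "(q,Some a,Some b,q') \<in> t_trans T" "P a b"
    by (auto simp: lex_t_def)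
  then show ?case
  proof cases
    case a
    then have "q' \<in> t_states T" using assms(4) by (auto simp: wf_transducer_def)
    then have "r = Suc (2*p) \<longrightarrow> t_run T q' u v p \<and> lexP P u v" using t_run_step a by blast
    moreover have "lexP P u v \<Longrightarrow> lexP P (opt_word x @ u) (opt_word y @ v)"
      using a by (cases x) (auto simp: lexP_Cons)
    ultimately show ?thesis using a t_run.t_run_step[OF a(2)] by auto
  next
    case b
    then have "q' \<in> t_states T" using assms(4) by (auto simp: wf_transducer_def)
    then obtain p' where "r = Suc (2*p')" "t_run T q' u v p'"
      using lex_odd[OF _ _ assms(4)] t_run_step.hyps(2) b by blast
    then show ?thesis using b run_step_some[of q a b q' T u v p'] by (auto simp: lexP_Cons)
  qed
qed

lemma lex_t_realizes:
  assumes "wf_transducer T" "letter_to_letter T"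
  shows "realizes (lex_t T P) = realizes T \<inter> {(u,v). lexP P u v}"
proof
  show "realizes T \<inter> {(u,v). lexP P u v} \<subseteq> realizes (lex_t T P)"
    using lex_fwd[OF _ assms(2,1)] unfolding realizes_def by (fastforce simp: lex_t_def)
next
  show "realizes (lex_t T P) \<subseteq> realizes T \<inter> {(u,v). lexP P u v}"
  proof
    fix w assume "w \<in> realizes (lex_t T P)"
    then obtain u v q p where w: "w = (u,v)" "q \<in> t_init T" "p \<in> t_final T"
      "t_run (lex_t T P) (2*q) u v (Suc (2*p))" unfolding realizes_def by (auto simp: lex_t_def)
    have "q \<in> t_states T" using w assms(1) by (auto simp: wf_transducer_def)
    from lex_bwd[OF w(4) refl this assms(1)] w
    show "w \<in> realizes T \<inter> {(u,v). lexP P u v}" unfolding realizes_def by blast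
  qed
qed


definition swap_t :: "'a transducer \<Rightarrow> 'a transducer" where
  "swap_t T = T\<lparr>t_trans := {(q,y,x,p) | q x y p. (q,x,y,p) \<in> t_trans T}\<rparr>"

lemma swap_run: "t_run T q u v p \<Longrightarrow> t_run (swap_t T) q v u p"
  by (induction rule: t_run.induct) (auto intro: t_run.intros simp: swap_t_def)

lemma swap_swap: "swap_t (swap_t T) = T"
proof -
  have "{(q,y,x,p) |q x y p. (q,y,x,p) \<in> t_trans T} = t_trans T" by auto
  then show ?thesis by (simp add: swap_t_def)
qed

lemma swap_realizes: "realizes (swap_t T) = converse (realizes T)"
proof -
  have "\<And>q u v p. t_run (swap_t T) q u v p \<longleftrightarrow> t_run T q v u p"
    by (metis swap_run swap_swap)
  moreover have "t_init (swap_t T) = t_init T" "t_final (swap_t T) = t_final T"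
    by (simp_all add: swap_t_def)
  ultimately show ?thesis unfolding realizes_def by auto
qed

lemma swap_wf: "wf_transducer T \<Longrightarrow> wf_transducer (swap_t T)"
  unfolding wf_transducer_def swap_t_def by auto

lemma rational_converse: "rational_rel R \<Longrightarrow> rational_rel (converse R)"
  unfolding rational_rel_def using swap_wf swap_realizes by metis

definition ne_t :: "'a nfa \<Rightarrow> 'a transducer" where
  "ne_t M = \<lparr>t_states = (\<lambda>q. 2*q) ` n_states M \<union> (\<lambda>q. Suc (2*q)) ` n_states M,
     t_init = (\<lambda>q. 2*q) ` n_init M,
     t_final = (\<lambda>q. Suc (2*q)) ` n_final M,
     t_trans = {(2*q,None,Some a,Suc (2*p)) | q a p. (q,a,p) \<in> n_trans M} \<union>
               {(Suc (2*q),None,Some a,Suc (2*p)) | q a p. (q,a,p) \<in> n_trans M}\<rparr>"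

lemma ne_t_wf: "wf_nfa M \<Longrightarrow> wf_transducer (ne_t M)"
  unfolding wf_transducer_def wf_nfa_def ne_t_def by auto

lemma ne_fwd: "n_run M q w p \<Longrightarrow> t_run (ne_t M) (Suc (2*q)) [] w (Suc (2*p))"
proof (induction rule: n_run.induct)
  case (n_run_nil q)
  then show ?case by (auto intro: t_run_nil simp: ne_t_def)
next
  case (n_run_step q a p w r)
  then have "(Suc (2*q), None, Some a, Suc (2*p)) \<in> t_trans (ne_t M)" by (auto simp: ne_t_def)
  from t_run_step[OF this n_run_step.IH] show ?case by simp
qed

lemma ne_odd: "t_run (ne_t M) s u w r \<Longrightarrow> s = Suc (2*q) \<Longrightarrow> q \<in> n_states M \<Longrightarrow> wf_nfa M \<Longrightarrow>
   \<exists>p. r = Suc (2*p) \<and> u = [] \<and> n_run M q w p"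
proof (induction arbitrary: q rule: t_run.induct)
  case (t_run_nil q')
  then show ?case by (auto intro: n_run_nil)
next
  case (t_run_step s x y s' u v r)
  then obtain a p where "x = None" "y = Some a" "s' = Suc (2*p)" "(q,a,p) \<in> n_trans M"
    by (auto simp: ne_t_def)
  moreover then have "p \<in> n_states M" using t_run_step by (auto simp: wf_nfa_def)
  ultimately show ?case using t_run_step by (auto intro: n_run_step)
qed

lemma ne_realizes:
  assumes "wf_nfa M"
  shows "realizes (ne_t M) = {[]} \<times> (accepts M - {[]})"
proof
  show "{[]} \<times> (accepts M - {[]}) \<subseteq> realizes (ne_t M)"
  proof
    fix z :: "'a list \<times> 'a list" assume "z \<in> {[]} \<times> (accepts M - {[]})"
    then obtain w q p where z: "z = ([],w)" "w \<noteq> []" "q \<in> n_init M" "p \<in> n_final M" "n_run M q w p"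
      unfolding accepts_def by auto
    then obtain a w' where w: "w = a#w'" by (cases w) auto
    from z(5)[unfolded w] obtain q' where "(q,a,q') \<in> n_trans M" "n_run M q' w' p"
      by (cases rule: n_run.cases) auto
    moreover then have "(2*q, None, Some a, Suc (2*q')) \<in> t_trans (ne_t M)" by (auto simp: ne_t_def)
    ultimately have "t_run (ne_t M) (2*q) [] (a#w') (Suc (2*p))"
      using t_run_step ne_fwd by fastforce
    then show "z \<in> realizes (ne_t M)" using z w unfolding realizes_def by (auto simp: ne_t_def)
  qed
next
  show "realizes (ne_t M) \<subseteq> {[]} \<times> (accepts M - {[]})"
  proof
    fix z assume "z \<in> realizes (ne_t M)"
    then obtain u v q p where z: "z = (u,v)" "q \<in> n_init M" "p \<in> n_final M"
      "t_run (ne_t M) (2*q) u v (Suc (2*p))" unfolding realizes_def by (auto simp: ne_t_def)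
    from z(4) obtain a q' u' v' where "(q,a,q') \<in> n_trans M" "u = u'" "v = a#v'"
      "t_run (ne_t M) (Suc (2*q')) u' v' (Suc (2*p))"
      by (cases rule: t_run.cases) (auto simp: ne_t_def)
    moreover then have "q' \<in> n_states M" using assms by (auto simp: wf_nfa_def)
    ultimately obtain p' where "Suc (2*p) = Suc (2*p')" "u = []" "n_run M q' v' p'" "v = a#v'"
      using ne_odd[OF _ refl _ assms] by blast
    then show "z \<in> {[]} \<times> (accepts M - {[]})"
      using z \<open>(q,a,q') \<in> n_trans M\<close> unfolding accepts_def by (auto intro: n_run_step)
  qed
qed

lemma rational_ne1: "regular_lang A \<Longrightarrow> rational_rel ({[]} \<times> (A - {[]}))"
  unfolding regular_lang_def rational_rel_def using ne_t_wf ne_realizes by metis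

lemma rational_ne2: "regular_lang A \<Longrightarrow> rational_rel ((A - {[]}) \<times> {[]})"
proof -
  assume "regular_lang A"
  from rational_converse[OF rational_ne1[OF this]] show ?thesis
    by (simp add: converse_Times)
qed


lemma lexP_swap: "lexP (\<lambda>a b. P b a) u v = lexP P v u"
  unfolding lexP_def by blast

lemma lexP_asym: "lexP (\<lambda>a b. f a < (f b::nat)) u v \<Longrightarrow> \<not> lexP (\<lambda>a b. f a < f b) v u"
proof (induction u arbitrary: v)
  case Nil then show ?case by simp
next
  case (Cons a u) then show ?case by (cases v) (auto simp: lexP_Cons)
qed

lemma lexP_total: "inj (f::'a \<Rightarrow> nat) \<Longrightarrow> length u = length v \<Longrightarrow> u \<noteq> v \<Longrightarrow>
   lexP (\<lambda>a b. f a < f b) u v \<or> lexP (\<lambda>a b. f a < f b) v u"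
proof (induction u arbitrary: v)
  case Nil then show ?case by simp
next
  case (Cons a u)
  then obtain b v' where v: "v = b#v'" by (cases v) auto
  show ?case
  proof (cases "a = b")
    case True then show ?thesis using Cons v by (auto simp: lexP_Cons)
  next
    case False then have "f a \<noteq> f b" using Cons(2) by (auto dest: injD)
    then show ?thesis using v by (auto simp: lexP_Cons)
  qed
qed

definition ordw :: "('a \<Rightarrow> nat) \<Rightarrow> 'a list \<Rightarrow> 'a list \<Rightarrow> bool" where
  "ordw f u v \<longleftrightarrow> length u < length v \<or> (length u = length v \<and> lexP (\<lambda>a b. f a < f b) u v)"

lemma ordw_asym: "ordw f u v \<Longrightarrow> \<not> ordw f v u"
  unfolding ordw_def using lexP_asym by fastforce

lemma ordw_total: "inj f \<Longrightarrow> u \<noteq> v \<Longrightarrow> ordw f u v \<or> ordw f v u"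
  unfolding ordw_def using lexP_total[of f u v] by force

lemma converse_rel_prod: "converse (rel_prod X Y) = rel_prod (converse X) (converse Y)"
  unfolding rel_prod_def by blast

lemma l2l_swap: "letter_to_letter T \<Longrightarrow> letter_to_letter (swap_t T)"
  unfolding letter_to_letter_def swap_t_def by auto

lemma l2l_rel_converse: "letter_to_letter_rel S \<Longrightarrow> letter_to_letter_rel (converse S)"
  unfolding letter_to_letter_rel_def using l2l_swap swap_wf swap_realizes by metis

lemma left_comp_converse: "left_sync_component C \<Longrightarrow> left_sync_component (converse C)"
  unfolding left_sync_component_def
  apply (elim exE conjE disjE)
  subgoal for S A by (intro exI[of _ "converse S"] exI[of _ A] conjI) (auto simp: converse_rel_prod converse_Times intro: l2l_rel_converse)
  subgoal for S A by (intro exI[of _ "converse S"] exI[of _ A] conjI) (auto simp: converse_rel_prod converse_Times intro: l2l_rel_converse)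
  done

lemma right_comp_converse: "right_sync_component C \<Longrightarrow> right_sync_component (converse C)"
  unfolding right_sync_component_def
  apply (elim exE conjE disjE)
  subgoal for S A by (intro exI[of _ "converse S"] exI[of _ A] conjI) (auto simp: converse_rel_prod converse_Times intro: l2l_rel_converse)
  subgoal for S A by (intro exI[of _ "converse S"] exI[of _ A] conjI) (auto simp: converse_rel_prod converse_Times intro: l2l_rel_converse)
  done

lemma l2l_rel_facts:
  assumes "letter_to_letter_rel S"
  shows "rational_rel S" "rational_rel (S \<inter> {(u,v). lexP P u v})"
    "\<And>u v. (u,v) \<in> S \<Longrightarrow> length u = length v"
proof -
  obtain T where T: "wf_transducer T" "letter_to_letter T" "realizes T = S"
    using assms unfolding letter_to_letter_rel_def by blast
  show "rational_rel S" using T unfolding rational_rel_def by blast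
  show "rational_rel (S \<inter> {(u,v). lexP P u v})"
    using T lex_t_wf lex_t_realizes unfolding rational_rel_def by metis
  show "\<And>u v. (u,v) \<in> S \<Longrightarrow> length u = length v"
    using T l2l_length unfolding realizes_def by blast
qed

lemma rational_if: "rational_rel X \<Longrightarrow> rational_rel (if b then X else {})"
  using rational_empty by auto

lemma case1:
  assumes "\<And>u v. (u,v) \<in> S \<Longrightarrow> length u = length v"
  shows "rel_prod S ({[]} \<times> A) \<inter> {(u,v). ordw f u v} =
    rel_prod S ({[]} \<times> (A - {[]})) \<union> (if [] \<in> A then S \<inter> {(u,v). lexP (\<lambda>a b. f a < f b) u v} else {})"
  using assms unfolding rel_prod_def ordw_def by (auto, force+)


lemma mem_rel_prod: "(u,v) \<in> rel_prod X Y \<longleftrightarrow> (\<exists>u1 u2 v1 v2. u=u1@u2 \<and> v=v1@v2 \<and> (u1,v1)\<in>X \<and> (u2,v2)\<in>Y)"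
  unfolding rel_prod_def by blast

lemma case1':
  assumes "\<And>u v. (u,v) \<in> S \<Longrightarrow> length u = length v"
  shows "rel_prod S ({[]} \<times> A) \<inter> {(u,v). ordw f u v} =
    rel_prod S ({[]} \<times> (A - {[]})) \<union> (if [] \<in> A then S \<inter> {(u,v). lexP (\<lambda>a b. f a < f b) u v} else {})"
  (is "?L = ?R")
proof (intro set_eqI iffI)
  fix x assume xL: "x \<in> ?L"
  obtain u v where xuv: "x = (u,v)" by (cases x)
  from xL xuv have "(u,v) \<in> rel_prod S ({[]} \<times> A)" "ordw f u v" by auto
  then obtain u1 u2 v1 v2 where h: "u=u1@u2" "v=v1@v2" "(u1,v1)\<in>S" "(u2,v2)\<in>{[]} \<times> A" "ordw f u v"
    unfolding mem_rel_prod by blast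
  show "x \<in> ?R"
  proof (cases "v2 = []")
    case True then show ?thesis using h xuv assms[OF h(3)] by (auto simp: ordw_def)
  next
    case False
    then have "(u,v) \<in> rel_prod S ({[]} \<times> (A - {[]}))" unfolding mem_rel_prod using h by blast
    then show ?thesis using xuv by blast
  qed
next
  fix x assume xR: "x \<in> ?R"
  obtain u v where xuv: "x = (u,v)" by (cases x)
  show "x \<in> ?L"
  proof (cases "(u,v) \<in> rel_prod S ({[]} \<times> (A - {[]}))")
    case True
    then obtain u1 u2 v1 v2 where h: "u=u1@u2" "v=v1@v2" "(u1,v1)\<in>S" "(u2,v2)\<in>{[]} \<times> (A - {[]})"
      unfolding mem_rel_prod by blast
    then have "ordw f u v" using assms[OF h(3)] by (auto simp: ordw_def)
    moreover have "(u,v) \<in> rel_prod S ({[]} \<times> A)" unfolding mem_rel_prod using h by blast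
    ultimately show ?thesis using xuv by blast
  next
    case False
    then have b: "(u,v) \<in> S" "[] \<in> A" "lexP (\<lambda>a b. f a < f b) u v" using xR xuv by (auto split: if_splits)
    then have "ordw f u v" using assms[OF b(1)] by (auto simp: ordw_def)
    moreover have "(u,v) \<in> rel_prod S ({[]} \<times> A)" unfolding mem_rel_prod using b
      by (intro exI[of _ u] exI[of _ "[]"] exI[of _ v] exI[of _ "[]"]) simp
    ultimately show ?thesis using xuv by blast
  qed
qed

lemma case2':
  assumes "\<And>u v. (u,v) \<in> S \<Longrightarrow> length u = length v"
  shows "rel_prod S (A \<times> {[]}) \<inter> {(u,v). ordw f u v} =
    (if [] \<in> A then S \<inter> {(u,v). lexP (\<lambda>a b. f a < f b) u v} else {})"
  (is "?L = ?R")
proof (intro set_eqI iffI)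
  fix x assume xL: "x \<in> ?L"
  obtain u v where xuv: "x = (u,v)" by (cases x)
  from xL xuv have "(u,v) \<in> rel_prod S (A \<times> {[]})" "ordw f u v" by auto
  then obtain u1 u2 v1 v2 where h: "u=u1@u2" "v=v1@v2" "(u1,v1)\<in>S" "(u2,v2)\<in>A \<times> {[]}" "ordw f u v"
    unfolding mem_rel_prod by blast
  have "u2 = []" using h assms[OF h(3)] by (cases u2) (auto simp: ordw_def)
  then show "x \<in> ?R" using h xuv assms[OF h(3)] by (auto simp: ordw_def)
next
  fix x assume xR: "x \<in> ?R"
  obtain u v where xuv: "x = (u,v)" by (cases x)
  have b: "(u,v) \<in> S" "[] \<in> A" "lexP (\<lambda>a b. f a < f b) u v" using xR xuv by (auto split: if_splits)
  then have "ordw f u v" using assms[OF b(1)] by (auto simp: ordw_def)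
  moreover have "(u,v) \<in> rel_prod S (A \<times> {[]})" unfolding mem_rel_prod using b
    by (intro exI[of _ u] exI[of _ "[]"] exI[of _ v] exI[of _ "[]"]) simp
  ultimately show "x \<in> ?L" using xuv by blast
qed

lemma case3':
  assumes "\<And>u v. (u,v) \<in> S \<Longrightarrow> length u = length v"
  shows "rel_prod ({[]} \<times> A) S \<inter> {(u,v). ordw f u v} =
    rel_prod ({[]} \<times> (A - {[]})) S \<union> (if [] \<in> A then S \<inter> {(u,v). lexP (\<lambda>a b. f a < f b) u v} else {})"
  (is "?L = ?R")
proof (intro set_eqI iffI)
  fix x assume xL: "x \<in> ?L"
  obtain u v where xuv: "x = (u,v)" by (cases x)
  from xL xuv have "(u,v) \<in> rel_prod ({[]} \<times> A) S" "ordw f u v" by auto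
  then obtain u1 u2 v1 v2 where h: "u=u1@u2" "v=v1@v2" "(u2,v2)\<in>S" "(u1,v1)\<in>{[]} \<times> A" "ordw f u v"
    unfolding mem_rel_prod by blast
  show "x \<in> ?R"
  proof (cases "v1 = []")
    case True then show ?thesis using h xuv assms[OF h(3)] by (auto simp: ordw_def)
  next
    case False
    then have "(u,v) \<in> rel_prod ({[]} \<times> (A - {[]})) S" unfolding mem_rel_prod using h by blast
    then show ?thesis using xuv by blast
  qed
next
  fix x assume xR: "x \<in> ?R"
  obtain u v where xuv: "x = (u,v)" by (cases x)
  show "x \<in> ?L"
  proof (cases "(u,v) \<in> rel_prod ({[]} \<times> (A - {[]})) S")
    case True
    then obtain u1 u2 v1 v2 where h: "u=u1@u2" "v=v1@v2" "(u2,v2)\<in>S" "(u1,v1)\<in>{[]} \<times> (A - {[]})"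
      unfolding mem_rel_prod by blast
    then have "ordw f u v" using assms[OF h(3)] by (auto simp: ordw_def)
    moreover have "(u,v) \<in> rel_prod ({[]} \<times> A) S" unfolding mem_rel_prod using h by blast
    ultimately show ?thesis using xuv by blast
  next
    case False
    then have b: "(u,v) \<in> S" "[] \<in> A" "lexP (\<lambda>a b. f a < f b) u v" using xR xuv by (auto split: if_splits)
    then have "ordw f u v" using assms[OF b(1)] by (auto simp: ordw_def)
    moreover have "(u,v) \<in> rel_prod ({[]} \<times> A) S" unfolding mem_rel_prod using b
      by (intro exI[of _ "[]"] exI[of _ u] exI[of _ "[]"] exI[of _ v]) simp
    ultimately show ?thesis using xuv by blast
  qed
qed

lemma case4':
  assumes "\<And>u v. (u,v) \<in> S \<Longrightarrow> length u = length v"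
  shows "rel_prod (A \<times> {[]}) S \<inter> {(u,v). ordw f u v} =
    (if [] \<in> A then S \<inter> {(u,v). lexP (\<lambda>a b. f a < f b) u v} else {})"
  (is "?L = ?R")
proof (intro set_eqI iffI)
  fix x assume xL: "x \<in> ?L"
  obtain u v where xuv: "x = (u,v)" by (cases x)
  from xL xuv have "(u,v) \<in> rel_prod (A \<times> {[]}) S" "ordw f u v" by auto
  then obtain u1 u2 v1 v2 where h: "u=u1@u2" "v=v1@v2" "(u2,v2)\<in>S" "(u1,v1)\<in>A \<times> {[]}" "ordw f u v"
    unfolding mem_rel_prod by blast
  have "u1 = []" using h assms[OF h(3)] by (cases u1) (auto simp: ordw_def)
  then show "x \<in> ?R" using h xuv assms[OF h(3)] by (auto simp: ordw_def)
next
  fix x assume xR: "x \<in> ?R"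
  obtain u v where xuv: "x = (u,v)" by (cases x)
  have b: "(u,v) \<in> S" "[] \<in> A" "lexP (\<lambda>a b. f a < f b) u v" using xR xuv by (auto split: if_splits)
  then have "ordw f u v" using assms[OF b(1)] by (auto simp: ordw_def)
  moreover have "(u,v) \<in> rel_prod (A \<times> {[]}) S" unfolding mem_rel_prod using b
    by (intro exI[of _ "[]"] exI[of _ u] exI[of _ "[]"] exI[of _ v]) simp
  ultimately show "x \<in> ?L" using xuv by blast
qed

lemma left_comp_rat: fixes C :: "'a wrel" shows "left_sync_component C \<Longrightarrow> rational_rel (C \<inter> {(u,v). ordw f u v})"
  unfolding left_sync_component_def
proof (elim exE conjE disjE)
  fix S :: "'a wrel" and A :: "'a list set" assume S: "letter_to_letter_rel S" and A: "regular_lang A"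
  note L = l2l_rel_facts[OF S]
  have r: "rational_rel (if [] \<in> A then S \<inter> {(u,v). lexP (\<lambda>a b. f a < f b) u v} else {})"
    by (rule rational_if[OF L(2)])
  {
    assume "C = rel_prod S (A \<times> {[]})"
    then show "rational_rel (C \<inter> {(u,v). ordw f u v})" using case2'[OF L(3)] r by simp
  next
    assume "C = rel_prod S ({[]} \<times> A)"
    moreover have "rational_rel (rel_prod S ({[]} \<times> (A - {[]})))"
      by (rule rational_prod[OF L(1) rational_ne1[OF A]])
    ultimately show "rational_rel (C \<inter> {(u,v). ordw f u v})"
      using case1'[OF L(3)] r rational_union by metis
  }
qed

lemma right_comp_rat: fixes C :: "'a wrel" shows "right_sync_component C \<Longrightarrow> rational_rel (C \<inter> {(u,v). ordw f u v})"
  unfolding right_sync_component_def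
proof (elim exE conjE disjE)
  fix S :: "'a wrel" and A :: "'a list set" assume S: "letter_to_letter_rel S" and A: "regular_lang A"
  note L = l2l_rel_facts[OF S]
  have r: "rational_rel (if [] \<in> A then S \<inter> {(u,v). lexP (\<lambda>a b. f a < f b) u v} else {})"
    by (rule rational_if[OF L(2)])
  {
    assume "C = rel_prod (A \<times> {[]}) S"
    then show "rational_rel (C \<inter> {(u,v). ordw f u v})" using case4'[OF L(3)] r by simp
  next
    assume "C = rel_prod ({[]} \<times> A) S"
    moreover have "rational_rel (rel_prod ({[]} \<times> (A - {[]})) S)"
      by (rule rational_prod[OF rational_ne1[OF A] L(1)])
    ultimately show "rational_rel (C \<inter> {(u,v). ordw f u v})"
      using case3'[OF L(3)] r rational_union by metis
  }
qed

lemma main: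
  fixes R :: "('a::finite) wrel"
  assumes irr: "irreflexive_rel R"
    and F: "finite F" "R = \<Union>F"
    and comp: "\<And>C f. C \<in> F \<Longrightarrow> rational_rel (C \<inter> {(u,v). ordw f u v})"
    and compc: "\<And>C. C \<in> F \<Longrightarrow> converse C \<in> G"
    and compG: "\<And>C f. C \<in> G \<Longrightarrow> rational_rel (C \<inter> {(u,v). ordw f u v})"
  shows "\<exists>A B. rational_asym_partition R A B"
proof -
  obtain f :: "'a \<Rightarrow> nat" where f: "inj f"
    using finite_imp_inj_to_nat_seg[of "UNIV :: 'a set"] by auto
  define O1 where "O1 = {(u,v). ordw f u v}"
  define A where "A = R \<inter> O1"
  define B where "B = R \<inter> converse O1"
  have A_eq: "A = \<Union>((\<lambda>C. C \<inter> O1) ` F)" unfolding A_def F(2) by auto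
  have B_eq: "B = \<Union>((\<lambda>C. converse (converse C \<inter> O1)) ` F)" unfolding B_def F(2) by auto
  have "rational_rel A" unfolding A_eq O1_def
    by (rule rational_Union) (use F comp in auto)
  moreover have "rational_rel B" unfolding B_eq O1_def
    by (rule rational_Union) (use F compc compG rational_converse in auto)
  moreover have "A \<union> B = R"
  proof
    show "A \<union> B \<subseteq> R" unfolding A_def B_def by blast
    show "R \<subseteq> A \<union> B"
    proof
      fix x assume "x \<in> R"
      then obtain u v where x: "x = (u,v)" and uv: "(u,v) \<in> R" by (cases x) auto
      then have "u \<noteq> v" using irr unfolding irreflexive_rel_def by blast
      then have "ordw f u v \<or> ordw f v u" using ordw_total[OF f] by blast
      then show "x \<in> A \<union> B" using uv x unfolding A_def B_def O1_def by auto
    qed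
  qed
  moreover have "A \<inter> B = {}"
  proof (rule equals0I)
    fix x assume "x \<in> A \<inter> B"
    then obtain u v where "(u,v) \<in> A" "(u,v) \<in> B" by (cases x) auto
    then have "ordw f u v" "ordw f v u" unfolding A_def B_def O1_def by auto
    then show False using ordw_asym by blast
  qed
  moreover have "asymmetric_rel A"
    unfolding asymmetric_rel_def
  proof (intro allI impI notI)
    fix u v assume "(u,v) \<in> A" "(v,u) \<in> A"
    then have "ordw f u v" "ordw f v u" unfolding A_def O1_def by auto
    then show False using ordw_asym by blast
  qed
  moreover have "asymmetric_rel B"
    unfolding asymmetric_rel_def
  proof (intro allI impI notI)
    fix u v assume "(u,v) \<in> B" "(v,u) \<in> B"
    then have "ordw f u v" "ordw f v u" unfolding B_def O1_def by auto
    then show False using ordw_asym by blast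
  qed
  ultimately show ?thesis unfolding rational_asym_partition_def by blast
qed

theorem corollary1:
  fixes R :: "('a::finite) wrel"
  assumes "irreflexive_rel R"
      and "left_synchronous R \<or> right_synchronous R"
  shows "\<exists>A B. rational_asym_partition R A B"
  using assms(2)
proof
  assume "left_synchronous R"
  then obtain F where F: "finite F" "\<forall>C\<in>F. left_sync_component C" "R = \<Union>F"
    unfolding left_synchronous_def by blast
  show ?thesis
    by (rule main[OF assms(1) F(1) F(3), where G="Collect left_sync_component"])
       (use F left_comp_rat left_comp_converse in auto)
next
  assume "right_synchronous R"
  then obtain F where F: "finite F" "\<forall>C\<in>F. right_sync_component C" "R = \<Union>F"
    unfolding right_synchronous_def by blast
  show ?thesis
    by (rule main[OF assms(1) F(1) F(3), where G="Collect right_sync_component"])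
       (use F right_comp_rat right_comp_converse in auto)
qed

end
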